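(* Let $(S^\Omega,\mathcal T)$ be a resource theory with a fair currency $\mathcal C$ (value function $\mathrm{Val}$) for a target $\mathcal S$. Then for every $V\in\mathcal S$, $$\mathrm{Cost}(V)=-\mathrm{Balance}(\Omega\to V),\qquad \mathrm{Yield}(V)=\mathrm{Balance}(V\to\Omega).$$
   Context: A resource theory $(S^\Omega,\mathcal T)$ consists of a set $\Omega$, the specification space $S^\Omega$ of all non-empty subsets of $\Omega$ (resources), and a set $\mathcal T$ of maps $f:S^\Omega\to S^\Omega$ acting element-wise, $f(V)=\bigcup_{\nu\in V} f(\{\nu\})$. $V\to W$ iff some $f\in\mathcal T$ has $f(V)\subseteq W$; $\to$ is assumed to be a pre-order. $\mathcal C\subseteq S^\Omega$ is a currency for target $\mathcal S\subseteq S^\Omega$ if (Order) any two elements of $\mathcal C$ are comparable under $\to$ and $\Omega\in\mathcal C$; (Universality) $\Omega\in\mathcal S$ and every $V\in\mathcal S$ has $C,C'\in\mathcal C$ with $C\to V$, $V\to C'$. A value function $\mathrm{Val}:\mathcal C\to\mathbb R_{\ge0}$ satisfies $\mathrm{Val}(C')\ge\mathrm{Val}(C)\iff C'\to C$ and $\mathrm{Val}(\Omega)=0$; $c_{\sup}=\sup_{C\in\mathcal C}\mathrm{Val}(C)$ (possibly $\infty$). $\mathrm{Cost}(V)=\inf\{\mathrm{Val}(C): C\in\mathcal C,\ C\to V\}$, $\mathrm{Yield}(V)=\sup\{\mathrm{Val}(C): C\in\mathcal C,\ V\to C\}$. Independence: $C\cap V\ne\emptyset$ for all $C\in\mathcal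 C,V\in\mathcal S$, and $C\to C'$ implies $C\cap V\to C'\cap V$ for all $V\in\mathcal S$. Balance: $\mathrm{Balance}(V\to W\mid C)=\sup\{\mathrm{Val}(C')-\mathrm{Val}(C): C'\in\mathcal C,\ V\cap C\to W\cap C'\}$ (with $\sup\emptyset=-\infty$) and $\mathrm{Balance}(V\to W)=\sup_{C\in\mathcal C}\mathrm{Balance}(V\to W\mid C)$. Fairness: $\mathcal C$ is independent of $\mathcal S$, and for all $V,W\in\mathcal S$ and $C_1,C_2\in\mathcal C$ with $V\cap C_1\to W\cap C_2$, setting $\Delta=\mathrm{Val}(C_2)-\mathrm{Val}(C_1)$: (F1) for every $C_1'\in\mathcal C$ with $-\Delta\le\mathrm{Val}(C_1')<c_{\sup}-\Delta$ there is $C_2'\in\mathcal C$ with $V\cap C_1'\to W\cap C_2'$ and $\mathrm{Val}(C_2')-\mathrm{Val}(C_1')=\Delta$; (F2) for every $C_2'\in\mathcal C$ with $\Delta\le\mathrm{Val}(C_2')$ there is $C_1'\in\mathcal C$ with $V\cap C_1'\to W\cap C_2'$ and $\mathrm{Val}(C_2')-\mathrm{Val}(C_1')=\Delta$. *)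

theory Defs
  imports Complex_Main "HOL-Library.Extended_Real"
begin

definition spec :: "'a set \<Rightarrow> 'a set set" where
  "spec Omega = {V. V \<subseteq> Omega \<and> V \<noteq> {}}"

definition conv :: "('a set \<Rightarrow> 'a set) set \<Rightarrow> 'a set \<Rightarrow> 'a set \<Rightarrow> bool" where
  "conv T V W \<longleftrightarrow> (\<exists>f\<in>T. f V \<subseteq> W)"

definition resource_theory :: "'a set \<Rightarrow> ('a set \<Rightarrow> 'a set) set \<Rightarrow> bool" where
  "resource_theory Omega T \<longleftrightarrow>
     (\<forall>f\<in>T. \<forall>V\<in>spec Omega. f V \<in> spec Omega \<and> f V = (\<Union>\<nu>\<in>V. f {\<nu>})) \<and>
     (\<forall>V\<in>spec Omega. conv T V V) \<and>
     (\<forall>U\<in>spec Omega. \<forall>V\<in>spec Omega. \<forall>W\<in>spec Omega.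
        conv T U V \<longrightarrow> conv T V W \<longrightarrow> conv T U W)"

definition currency ::
  "'a set \<Rightarrow> ('a set \<Rightarrow> 'a set) set \<Rightarrow> 'a set set \<Rightarrow> 'a set set \<Rightarrow> bool" where
  "currency Omega T Cur Tgt \<longleftrightarrow>
     Cur \<subseteq> spec Omega \<and> Tgt \<subseteq> spec Omega \<and>
     (\<forall>C\<in>Cur. \<forall>C'\<in>Cur. conv T C C' \<or> conv T C' C) \<and> Omega \<in> Cur \<and>
     Omega \<in> Tgt \<and>
     (\<forall>V\<in>Tgt. \<exists>C\<in>Cur. \<exists>C'\<in>Cur. conv T C V \<and> conv T V C')"

definition value_function ::
  "'a set \<Rightarrow> ('a set \<Rightarrow> 'a set) set \<Rightarrow> 'a set set \<Rightarrow> ('a set \<Rightarrow> real) \<Rightarrow> bool" where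
  "value_function Omega T Cur Val \<longleftrightarrow>
     (\<forall>C\<in>Cur. Val C \<ge> 0) \<and>
     (\<forall>C\<in>Cur. \<forall>C'\<in>Cur. Val C' \<ge> Val C \<longleftrightarrow> conv T C' C) \<and>
     Val Omega = 0"

definition c_sup :: "'a set set \<Rightarrow> ('a set \<Rightarrow> real) \<Rightarrow> ereal" where
  "c_sup Cur Val = (SUP C\<in>Cur. ereal (Val C))"

definition Cost ::
  "('a set \<Rightarrow> 'a set) set \<Rightarrow> 'a set set \<Rightarrow> ('a set \<Rightarrow> real) \<Rightarrow> 'a set \<Rightarrow> ereal" where
  "Cost T Cur Val V = (INF C\<in>{C\<in>Cur. conv T C V}. ereal (Val C))"

definition Yield ::
  "('a set \<Rightarrow> 'a set) set \<Rightarrow> 'a set set \<Rightarrow> ('a set \<Rightarrow> real) \<Rightarrow> 'a set \<Rightarrow> ereal" where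
  "Yield T Cur Val V = (SUP C\<in>{C\<in>Cur. conv T V C}. ereal (Val C))"

text \<open>Balance given currency C; SUP over the empty set is -infinity in ereal.\<close>
definition Balance_given ::
  "('a set \<Rightarrow> 'a set) set \<Rightarrow> 'a set set \<Rightarrow> ('a set \<Rightarrow> real) \<Rightarrow> 'a set \<Rightarrow> 'a set \<Rightarrow> 'a set \<Rightarrow> ereal" where
  "Balance_given T Cur Val V W C =
     (SUP C'\<in>{C'\<in>Cur. conv T (V \<inter> C) (W \<inter> C')}. ereal (Val C' - Val C))"

definition Balance ::
  "('a set \<Rightarrow> 'a set) set \<Rightarrow> 'a set set \<Rightarrow> ('a set \<Rightarrow> real) \<Rightarrow> 'a set \<Rightarrow> 'a set \<Rightarrow> ereal" where
  "Balance T Cur Val V W = (SUP C\<in>Cur. Balance_given T Cur Val V W C)"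

definition independent ::
  "('a set \<Rightarrow> 'a set) set \<Rightarrow> 'a set set \<Rightarrow> 'a set set \<Rightarrow> bool" where
  "independent T Cur Tgt \<longleftrightarrow>
     (\<forall>C\<in>Cur. \<forall>V\<in>Tgt. C \<inter> V \<noteq> {}) \<and>
     (\<forall>C\<in>Cur. \<forall>C'\<in>Cur. conv T C C' \<longrightarrow> (\<forall>V\<in>Tgt. conv T (C \<inter> V) (C' \<inter> V)))"

definition fair ::
  "('a set \<Rightarrow> 'a set) set \<Rightarrow> 'a set set \<Rightarrow> 'a set set \<Rightarrow> ('a set \<Rightarrow> real) \<Rightarrow> bool" where
  "fair T Cur Tgt Val \<longleftrightarrow>
     independent T Cur Tgt \<and>
     (\<forall>V\<in>Tgt. \<forall>W\<in>Tgt. \<forall>C1\<in>Cur. \<forall>C2\<in>Cur.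
        conv T (V \<inter> C1) (W \<inter> C2) \<longrightarrow>
        (let \<Delta> = Val C2 - Val C1 in
          (\<forall>C1'\<in>Cur. - \<Delta> \<le> Val C1' \<and> ereal (Val C1') < c_sup Cur Val - ereal \<Delta> \<longrightarrow>
             (\<exists>C2'\<in>Cur. conv T (V \<inter> C1') (W \<inter> C2') \<and> Val C2' - Val C1' = \<Delta>)) \<and>
          (\<forall>C2'\<in>Cur. \<Delta> \<le> Val C2' \<longrightarrow>
             (\<exists>C1'\<in>Cur. conv T (V \<inter> C1') (W \<inter> C2') \<and> Val C2' - Val C1' = \<Delta>))))"

end

theory Submission
  imports Defs
begin

theorem mainTheorem9:
  fixes Omega :: "'a set" and T :: "('a set \<Rightarrow> 'a set) set"
    and Cur Tgt :: "'a set set" and Val :: "'a set \<Rightarrow> real"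
  assumes "resource_theory Omega T"
    and "currency Omega T Cur Tgt"
    and "value_function Omega T Cur Val"
    and "fair T Cur Tgt Val"
    and "V \<in> Tgt"
  shows "Cost T Cur Val V = - Balance T Cur Val Omega V \<and>
         Yield T Cur Val V = Balance T Cur Val V Omega"
proof -
  note RT = assms(1)[unfolded resource_theory_def]
  note CU = assms(2)[unfolded currency_def]
  note VF = assms(3)[unfolded value_function_def]
  note FA = assms(4)[unfolded fair_def independent_def Let_def]
  have OmC: "Omega \<in> Cur" and OmT: "Omega \<in> Tgt" using CU by auto
  have Csub: "\<And>C. C \<in> Cur \<Longrightarrow> C \<subseteq> Omega \<and> C \<noteq> {}" using CU by (auto simp: spec_def)
  have Vsub: "V \<subseteq> Omega" "V \<noteq> {}" using CU assms(5) by (auto simp: spec_def)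
  have Val0: "Val Omega = 0" using VF by auto
  have Valnn: "\<And>C. C \<in> Cur \<Longrightarrow> Val C \<ge> 0" using VF by auto
  have Valiff: "\<And>C C'. C \<in> Cur \<Longrightarrow> C' \<in> Cur \<Longrightarrow> Val C' \<ge> Val C \<longleftrightarrow> conv T C' C"
    using VF by auto
  have convmono: "\<And>A B B'. conv T A B \<Longrightarrow> B \<subseteq> B' \<Longrightarrow> conv T A B'"
    unfolding conv_def by (meson order_trans)
  have F1: "\<exists>C2'\<in>Cur. conv T (V \<inter> C1') (W \<inter> C2') \<and> Val C2' - Val C1' = Val C2 - Val C1"
    if "V \<in> Tgt" "W \<in> Tgt" "C1 \<in> Cur" "C2 \<in> Cur"
      "conv T (V \<inter> C1) (W \<inter> C2)" "C1' \<in> Cur"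
      "- (Val C2 - Val C1) \<le> Val C1'" "ereal (Val C1') < c_sup Cur Val - ereal (Val C2 - Val C1)"
    for V W C1 C2 C1'
  proof -
    note H = conjunct2[OF FA, rule_format, OF that(1-5)]
    show ?thesis using conjunct1[OF H] that(6-8) by blast
  qed
  have F2: "\<exists>C1'\<in>Cur. conv T (V \<inter> C1') (W \<inter> C2') \<and> Val C2' - Val C1' = Val C2 - Val C1"
    if "V \<in> Tgt" "W \<in> Tgt" "C1 \<in> Cur" "C2 \<in> Cur"
      "conv T (V \<inter> C1) (W \<inter> C2)" "C2' \<in> Cur" "Val C2 - Val C1 \<le> Val C2'"
    for V W C1 C2 C2'
  proof -
    note H = conjunct2[OF FA, rule_format, OF that(1-5)]
    show ?thesis using conjunct2[OF H] that(6-7) by blast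
  qed
  have IND1: "\<And>C. C \<in> Cur \<Longrightarrow> C \<inter> V \<noteq> {}" using conjunct1[OF FA] assms(5) by blast
  have IND2: "\<And>C C'. C \<in> Cur \<Longrightarrow> C' \<in> Cur \<Longrightarrow> conv T C C' \<Longrightarrow> conv T (C \<inter> V) (C' \<inter> V)"
    using conjunct1[OF FA] assms(5) by blast
  have trans: "\<And>U X W. U \<in> spec Omega \<Longrightarrow> X \<in> spec Omega \<Longrightarrow> W \<in> spec Omega \<Longrightarrow>
      conv T U X \<Longrightarrow> conv T X W \<Longrightarrow> conv T U W" using RT by blast
  have refl: "\<And>X. X \<in> spec Omega \<Longrightarrow> conv T X X" using RT by blast
  have Vspec: "V \<in> spec Omega" using Vsub by (simp add: spec_def)
  have c1: "- Balance T Cur Val Omega V \<le> Cost T Cur Val V"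
    unfolding Cost_def
  proof (rule INF_greatest)
    fix C assume "C \<in> {C\<in>Cur. conv T C V}"
    hence C: "C \<in> Cur" "conv T C V" by auto
    have "conv T (Omega \<inter> C) (V \<inter> Omega)" using C Csub[OF C(1)] Vsub by (simp add: Int_absorb1 Int_absorb2)
    hence "ereal (Val Omega - Val C) \<le> Balance_given T Cur Val Omega V C"
      unfolding Balance_given_def using OmC by (intro SUP_upper) auto
    also have "\<dots> \<le> Balance T Cur Val Omega V" unfolding Balance_def using C by (intro SUP_upper)
    finally have "- ereal (Val C) \<le> Balance T Cur Val Omega V" using Val0 by simp
    thus "- Balance T Cur Val Omega V \<le> ereal (Val C)" by (simp add: ereal_uminus_le_reorder)
  qed
  have c2: "Balance T Cur Val Omega V \<le> - Cost T Cur Val V"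
    unfolding Balance_def Balance_given_def
  proof (intro SUP_least)
    fix C C' assume C: "C \<in> Cur" and "C' \<in> {C'\<in>Cur. conv T (Omega \<inter> C) (V \<inter> C')}"
    hence C': "C' \<in> Cur" "conv T (Omega \<inter> C) (V \<inter> C')" by auto
    have cc: "conv T C (V \<inter> C')" using C'(2) Csub[OF C] by (simp add: Int_absorb1)
    hence "conv T C C'" by (rule convmono) auto
    hence "Val C' \<le> Val C" using Valiff[OF C' (1) C] by simp
    then obtain C1 where C1: "C1 \<in> Cur" "conv T (Omega \<inter> C1) (V \<inter> Omega)"
        "Val Omega - Val C1 = Val C' - Val C"
      using F2[OF OmT assms(5) C C'(1) C'(2) OmC] Val0 by auto
    have "conv T C1 V" using C1(2) Csub[OF C1(1)] Vsub by (simp add: Int_absorb1 Int_absorb2)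
    hence "Cost T Cur Val V \<le> ereal (Val C1)" unfolding Cost_def using C1(1) by (intro INF_lower) auto
    also have "\<dots> = - ereal (Val C' - Val C)" using C1(3) Val0 by simp
    finally have "Cost T Cur Val V \<le> - ereal (Val C' - Val C)" .
    thus "ereal (Val C' - Val C) \<le> - Cost T Cur Val V" by (metis ereal_uminus_le_reorder ereal_uminus_uminus)
  qed
  have cost: "Cost T Cur Val V = - Balance T Cur Val Omega V"
  proof (rule antisym)
    show "Cost T Cur Val V \<le> - Balance T Cur Val Omega V" using c2 by (metis ereal_uminus_le_reorder ereal_uminus_uminus)
  qed (rule c1)
  have y1: "Yield T Cur Val V \<le> Balance T Cur Val V Omega"
    unfolding Yield_def
  proof (rule SUP_least)
    fix C assume "C \<in> {C\<in>Cur. conv T V C}"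
    hence C: "C \<in> Cur" "conv T V C" by auto
    have "conv T (V \<inter> Omega) (Omega \<inter> C)" using C Csub[OF C(1)] Vsub by (simp add: Int_absorb1 Int_absorb2)
    hence "ereal (Val C - Val Omega) \<le> Balance_given T Cur Val V Omega Omega"
      unfolding Balance_given_def using C by (intro SUP_upper) auto
    also have "\<dots> \<le> Balance T Cur Val V Omega" unfolding Balance_def using OmC by (intro SUP_upper)
    finally show "ereal (Val C) \<le> Balance T Cur Val V Omega" using Val0 by simp
  qed
  have VOm: "conv T V Omega" using refl[OF Vspec] Vsub(1) by (rule convmono)
  have Y0: "ereal 0 \<le> Yield T Cur Val V" unfolding Yield_def
    using VOm OmC Val0 by (metis (mono_tags, lifting) SUP_upper mem_Collect_eq)
  have y2: "Balance T Cur Val V Omega \<le> Yield T Cur Val V"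
    unfolding Balance_def Balance_given_def
  proof (intro SUP_least)
    fix C C' assume C: "C \<in> Cur" and "C' \<in> {C'\<in>Cur. conv T (V \<inter> C) (Omega \<inter> C')}"
    hence C': "C' \<in> Cur" "conv T (V \<inter> C) (Omega \<inter> C')" by auto
    have cc: "conv T (V \<inter> C) C'" using C'(2) Csub[OF C'(1)] by (simp add: Int_absorb1)
    show "ereal (Val C' - Val C) \<le> Yield T Cur Val V"
    proof (cases "Val C' - Val C < 0")
      case True thus ?thesis using Y0 by (metis ereal_less_eq(3) less_imp_le order_trans)
    next
      case False
      show ?thesis
      proof (cases "ereal 0 < c_sup Cur Val - ereal (Val C' - Val C)")
        case True
        then obtain C2 where C2: "C2 \<in> Cur" "conv T (V \<inter> Omega) (Omega \<inter> C2)"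
            "Val C2 - Val Omega = Val C' - Val C"
          using F1[OF assms(5) OmT C C'(1) C'(2) OmC] Val0 False by auto
        have "conv T V C2" using C2(2) Csub[OF C2(1)] Vsub by (simp add: Int_absorb1 Int_absorb2)
        hence "ereal (Val C2) \<le> Yield T Cur Val V" unfolding Yield_def using C2(1)
          by (intro SUP_upper) auto
        thus ?thesis using C2(3) Val0 by simp
      next
        case nle: False
        have "ereal (Val C') \<le> c_sup Cur Val" unfolding c_sup_def using C'(1) by (rule SUP_upper)
        moreover have "c_sup Cur Val \<le> ereal (Val C' - Val C)" using nle
          by (cases "c_sup Cur Val") auto
        ultimately have "Val C' \<le> Val C' - Val C" by (metis ereal_less_eq(3) order_trans)
        hence "Val C \<le> 0" by simp
        hence "Val C \<le> Val Omega" using Val0 by simp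
        hence "conv T Omega C" using Valiff[OF C OmC] by simp
        hence "conv T (Omega \<inter> V) (C \<inter> V)" using IND2 OmC C by blast
        hence cv: "conv T V (V \<inter> C)" using Vsub by (simp add: Int_absorb1 Int_commute)
        have s1: "V \<inter> C \<in> spec Omega" using IND1[OF C] Csub[OF C] by (auto simp: spec_def)
        have s2: "C' \<in> spec Omega" using Csub[OF C'(1)] by (simp add: spec_def)
        have "conv T V C'" using trans[OF Vspec s1 s2 cv cc] .
        hence "ereal (Val C') \<le> Yield T Cur Val V" unfolding Yield_def using C'(1)
          by (intro SUP_upper) auto
        moreover have "Val C' - Val C \<le> Val C'" using Valnn[OF C] by simp
        ultimately show ?thesis by (meson ereal_less_eq(3) order_trans)
      qed
    qed
  qed
  show ?thesis using cost y1 y2 by auto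
qed

end
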